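(* For every $n\ge1$, every $f\colon\mathbb F_2^n\to\mathbb R$, every $\epsilon> 0$ and every $\delta\in(0,1/2]$ such that $\xi:=\|f\|_2^2-\epsilon(1+2\delta)>0$, it holds that $\mathcal D^{\to,U}_{\epsilon}(f^+)\ge \frac{\delta}{2}\cdot\dim_{\xi}(f)$.
   Context: Fourier analysis: for $\alpha\in\mathbb F_2^n$ let $\chi_\alpha(x)=(-1)^{\sum_i\alpha_i x_i}$; $\hat f(\alpha)=\mathbb E_{x\sim U(\mathbb F_2^n)}[f(x)\chi_\alpha(x)]$; $\|f\|_2^2=\mathbb E_x[f(x)^2]$. Approximate Fourier dimension: for $\xi\in(0,\|f\|_2^2]$, $\dim_\xi(f)$ is the minimum $k$ such that there exists a linear subspace $A\subseteq\mathbb F_2^n$ of dimension $k$ with $\sum_{\alpha\in A}\hat f(\alpha)^2\ge\xi$. The XOR-function of $f$ is $f^+(x,y)=f(x+y)$ for $x,y\in\mathbb F_2^n$ (addition mod 2). Distributional one-way communication complexity under the uniform distribution: $\mathcal D^{\to,U}_\epsilon(f^+)$ is the minimum, over deterministic one-way protocols $\Pi$ in which Alice (holding $x$) sends a single message $M(x)$ to Bob (holding $y$) who then outputs a real number $\Pi(x,y)$ depending only on $M(x)$ and $y$, satisfying $\mathbb E_{x,y\sim U(\mathbb F_2^n)}[(\Pi(x,y)-f^+(x,y))^2]\le\epsilon$, of the maximum length in bits of Alice's message. *)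

theory Defs
  imports "HOL-Analysis.Analysis" "HOL-Library.Z2"
begin

text \<open>F_2^n is modelled as bit ^ 'n for a finite index type 'n (n = CARD('n) >= 1).\<close>

definition expect :: "(bit ^ 'n \<Rightarrow> real) \<Rightarrow> real" where
  "expect g = (\<Sum>x\<in>UNIV. g x) / real (card (UNIV :: (bit ^ 'n) set))"

definition chi :: "bit ^ 'n \<Rightarrow> bit ^ 'n \<Rightarrow> real" where
  "chi \<alpha> x = (if (\<Sum>i\<in>UNIV. \<alpha> $ i * x $ i) = 0 then 1 else -1)"

definition fourier :: "(bit ^ 'n \<Rightarrow> real) \<Rightarrow> bit ^ 'n \<Rightarrow> real" where
  "fourier f \<alpha> = expect (\<lambda>x. f x * chi \<alpha> x)"

definition norm2sq :: "(bit ^ 'n \<Rightarrow> real) \<Rightarrow> real" where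
  "norm2sq f = expect (\<lambda>x. (f x)^2)"

definition approx_fourier_dim :: "real \<Rightarrow> (bit ^ 'n \<Rightarrow> real) \<Rightarrow> nat" where
  "approx_fourier_dim \<xi> f = (LEAST k. \<exists>A :: (bit ^ 'n) set.
      vec.subspace A \<and> vec.dim A = k \<and> (\<Sum>\<alpha>\<in>A. (fourier f \<alpha>)^2) \<ge> \<xi>)"

text \<open>Distributional one-way communication complexity of f^+ under the uniform
  distribution: Alice sends M x (a bit string), Bob outputs B (M x) y.\<close>
definition oneway_cc :: "real \<Rightarrow> (bit ^ 'n \<Rightarrow> real) \<Rightarrow> nat" where
  "oneway_cc \<epsilon> f = (LEAST c. \<exists>(M :: bit ^ 'n \<Rightarrow> bool list) (B :: bool list \<Rightarrow> bit ^ 'n \<Rightarrow> real).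
      (\<forall>x. length (M x) \<le> c) \<and>
      expect (\<lambda>x. expect (\<lambda>y. (B (M x) y - f (x + y))^2)) \<le> \<epsilon>)"

end

theory Submission
  imports Defs
begin


lemma bit_UNIV_eq: "(UNIV::bit set) = {0,1}" by (auto intro: bit.exhaust)

instance bit :: finite
  by standard (simp add: bit_UNIV_eq)

declare add_bit_eq_xor[simp del] mult_bit_eq_and[simp del]

lemma bit_cases2: "(b::bit) = 0 \<or> b = 1"
  by (cases b) auto

lemma bit_add_self: "(b::bit) + b = 0"
  by (cases b) auto

lemma vec_add_self: "(x::bit^'n) + x = 0"
  by (simp add: vec_eq_iff bit_add_self)

lemma card_UNIV_pos: "card (UNIV :: (bit^'n) set) > 0"
  by (simp add: card_gt_0_iff)

lemma chi_sq: "chi a x * chi a x = 1" "(chi a x)^2 = 1"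
  by (auto simp: chi_def power2_eq_square)

lemma chi_sym: "chi a x = chi x a"
  unfolding chi_def by (simp add: mult.commute)

lemma chi_add: "chi a (x + y) = chi a x * chi a y"
proof -
  have "(\<Sum>i\<in>UNIV. a $ i * (x+y) $ i) = (\<Sum>i\<in>UNIV. a $ i * x $ i) + (\<Sum>i\<in>UNIV. a $ i * y $ i)"
    by (simp add: distrib_left sum.distrib)
  moreover have "\<And>u v::bit. (if u + v = 0 then (1::real) else -1) = (if u = 0 then 1 else -1) * (if v = 0 then 1 else -1)"
    subgoal for u v by (cases u; cases v) auto
    done
  ultimately show ?thesis unfolding chi_def by metis
qed


lemma chi_sym2: "chi a x * chi a z = chi x a * chi z a"
  by (simp add: chi_def mult.commute)

lemma chi_add_left: "chi (a + b) x = chi a x * chi b x"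
  by (metis chi_sym chi_add)

lemma chi_zero: "chi 0 x = 1"
  by (simp add: chi_def)

lemma chi_pm: "chi a x = 1 \<or> chi a x = -1"
  by (simp add: chi_def)

lemma add_eq0_iff: "(a::bit^'n) + b = 0 \<longleftrightarrow> a = b"
proof
  assume "a + b = 0"
  then have "a + b + b = b" by simp
  then show "a = b" by (simp add: add.assoc vec_add_self)
qed (simp add: vec_add_self)

lemma sum_shift: "(\<Sum>x\<in>UNIV. h (x + e)) = (\<Sum>x\<in>(UNIV::(bit^'n) set). h x)"
  by (rule sum.reindex_bij_witness[where i="\<lambda>x. x + e" and j="\<lambda>x. x + e"])
     (auto simp: add.assoc vec_add_self)

lemma sum_chi: "(\<Sum>x\<in>UNIV. chi g (x::bit^'n)) = (if g = 0 then real (card (UNIV :: (bit^'n) set)) else 0)"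
proof (cases "g = 0")
  case True then show ?thesis by (simp add: chi_zero)
next
  case False
  then obtain i where gi: "g $ i \<noteq> 0" by (auto simp: vec_eq_iff)
  then have gi1: "g $ i = 1" by simp
  define e :: "bit^'n" where "e = axis i 1"
  have "(\<Sum>j\<in>UNIV. g $ j * e $ j) = (\<Sum>j\<in>UNIV. if j = i then g $ j else 0)"
    by (rule sum.cong) (auto simp: e_def axis_def)
  also have "\<dots> = 1" using gi1 by simp
  finally have ce: "chi g e = -1" by (simp add: chi_def)
  have "(\<Sum>x\<in>UNIV. chi g (x::bit^'n)) = (\<Sum>x\<in>UNIV. chi g (x + e))"
    by (rule sum_shift[symmetric])
  also have "\<dots> = - (\<Sum>x\<in>UNIV. chi g (x::bit^'n))"
    by (simp add: chi_add ce sum_negf)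
  finally show ?thesis using False by simp
qed

lemma orth: "(\<Sum>x\<in>UNIV. chi a (x::bit^'n) * chi b x) = (if a = b then real (card (UNIV :: (bit^'n) set)) else 0)"
  by (simp add: chi_add_left[symmetric] sum_chi add_eq0_iff)

lemma key_sq: "(\<Sum>y\<in>UNIV. (\<Sum>a\<in>UNIV. c a * chi a (y::bit^'n))^2) = real (card (UNIV :: (bit^'n) set)) * (\<Sum>a\<in>UNIV. (c a)^2)"
proof -
  have "(\<Sum>y\<in>UNIV. (\<Sum>a\<in>UNIV. c a * chi a (y::bit^'n))^2) = (\<Sum>y\<in>UNIV. \<Sum>a\<in>UNIV. \<Sum>b\<in>UNIV. c a * c b * (chi a y * chi b y))"
    by (simp add: power2_eq_square sum_product algebra_simps)
  also have "\<dots> = (\<Sum>a\<in>UNIV. \<Sum>y\<in>UNIV. \<Sum>b\<in>UNIV. c a * c b * (chi a y * chi b y))"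
    by (rule sum.swap)
  also have "\<dots> = (\<Sum>a\<in>UNIV. \<Sum>b\<in>UNIV. \<Sum>y\<in>UNIV. c a * c b * (chi a y * chi b y))"
    by (rule sum.cong[OF refl], rule sum.swap)
  also have "\<dots> = (\<Sum>a\<in>UNIV. \<Sum>b\<in>UNIV. c a * c b * (if a = b then real (card (UNIV :: (bit^'n) set)) else 0))"
    by (simp add: sum_distrib_left[symmetric] orth)
  also have "\<dots> = (\<Sum>a\<in>UNIV. real (card (UNIV :: (bit^'n) set)) * (c a)^2)"
    by (rule sum.cong[OF refl]) (simp add: if_distrib power2_eq_square cong: if_cong)
  finally show ?thesis by (simp add: sum_distrib_left)
qed

lemma inversion: "f z = (\<Sum>a\<in>UNIV. fourier f a * chi a (z::bit^'n))"
proof -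
  let ?N = "real (card (UNIV :: (bit^'n) set))"
  have N0: "?N > 0" using card_UNIV_pos by simp
  have eq: "fourier f a * chi a z = (\<Sum>x\<in>UNIV. f x * (chi x a * chi z a)) / ?N" for a
  proof -
    have "fourier f a * chi a z = (\<Sum>x\<in>UNIV. f x * (chi a x * chi a z)) / ?N"
      unfolding fourier_def expect_def by (simp add: sum_distrib_right mult.assoc)
    also have "\<dots> = (\<Sum>x\<in>UNIV. f x * (chi x a * chi z a)) / ?N"
      by (simp only: chi_sym2)
    finally show ?thesis .
  qed
  from eq have "(\<Sum>a\<in>UNIV. fourier f a * chi a z) = (\<Sum>a\<in>UNIV. \<Sum>x\<in>UNIV. f x * (chi x a * chi z a)) / ?N"
    by (simp add: sum_divide_distrib)
  also have "\<dots> = (\<Sum>x\<in>UNIV. \<Sum>a\<in>UNIV. f x * (chi x a * chi z a)) / ?N"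
    by (subst sum.swap) (rule refl)
  also have "\<dots> = (\<Sum>x\<in>UNIV. f x * (\<Sum>a\<in>UNIV. chi x a * chi z a)) / ?N"
    by (simp add: sum_distrib_left)
  also have "\<dots> = (\<Sum>x\<in>UNIV. if x = z then f x * ?N else 0) / ?N"
    by (simp add: orth if_distrib cong: if_cong)
  also have "\<dots> = f z" using N0 by simp
  finally show ?thesis by simp
qed

lemma parseval: "norm2sq (f :: bit^'n \<Rightarrow> real) = (\<Sum>a\<in>UNIV. (fourier f a)^2)"
proof -
  let ?N = "real (card (UNIV :: (bit^'n) set))"
  have N0: "?N > 0" using card_UNIV_pos by simp
  have "norm2sq f = (\<Sum>y\<in>UNIV. (\<Sum>a\<in>UNIV. fourier f a * chi a y)^2) / ?N"
    unfolding norm2sq_def expect_def by (subst inversion[of f]) (rule refl)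
  also have "\<dots> = (\<Sum>a\<in>UNIV. (fourier f a)^2)" using N0 by (simp add: key_sq)
  finally show ?thesis .
qed



lemma var_lb:
  fixes g :: "'a \<Rightarrow> real"
  assumes "finite S" "S \<noteq> {}"
  shows "(\<Sum>x\<in>S. (b - g x)^2) \<ge> (\<Sum>x\<in>S. (g x)^2) - (\<Sum>x\<in>S. g x)^2 / real (card S)"
proof -
  define k where "k = real (card S)"
  define G where "G = (\<Sum>x\<in>S. g x)"
  have k0: "k > 0" using assms by (simp add: k_def card_gt_0_iff)
  have "(\<Sum>x\<in>S. (b - g x)^2) = (\<Sum>x\<in>S. b^2 - 2 * b * g x + (g x)^2)"
    by (rule sum.cong[OF refl]) (simp add: power2_diff algebra_simps)
  also have "\<dots> = k * b^2 - 2 * b * G + (\<Sum>x\<in>S. (g x)^2)"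
    by (simp add: sum.distrib sum_subtractf sum_distrib_left k_def G_def)
  finally have e: "(\<Sum>x\<in>S. (b - g x)^2) = k * b^2 - 2 * b * G + (\<Sum>x\<in>S. (g x)^2)" .
  have q: "k * b^2 - 2 * b * G + G^2 / k = (k * b - G)^2 / k"
    using k0 by (simp add: field_simps power2_eq_square)
  have "(k * b - G)^2 / k \<ge> 0" using k0 by simp
  then have "k * b^2 - 2 * b * G + G^2 / k \<ge> 0" using q by simp
  then show ?thesis using e by (simp add: k_def G_def)
qed

lemma conv_expand:
  "(\<Sum>x\<in>S. f (x + y)) = (\<Sum>a\<in>UNIV. (fourier f a * (\<Sum>x\<in>S. chi a x)) * chi a (y::bit^'n))"
proof -
  have "(\<Sum>x\<in>S. f (x + y)) = (\<Sum>x\<in>S. \<Sum>a\<in>UNIV. fourier f a * chi a x * chi a y)"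
    by (rule sum.cong[OF refl]) (subst inversion[of f], simp add: chi_add mult.assoc)
  also have "\<dots> = (\<Sum>a\<in>UNIV. \<Sum>x\<in>S. fourier f a * chi a x * chi a y)"
    by (rule sum.swap)
  also have "\<dots> = (\<Sum>a\<in>UNIV. (fourier f a * (\<Sum>x\<in>S. chi a x)) * chi a (y::bit^'n))"
    by (simp add: sum_distrib_left sum_distrib_right)
  finally show ?thesis .
qed

lemma conv_sq:
  "(\<Sum>y\<in>UNIV. (\<Sum>x\<in>S. f (x + y))^2) = real (card (UNIV :: (bit^'n) set)) * (\<Sum>a\<in>UNIV. (fourier f a)^2 * (\<Sum>x\<in>S. chi a (x::bit^'n))^2)"
  by (simp add: conv_expand key_sq power_mult_distrib)

lemma sum_shift2: "(\<Sum>y\<in>UNIV. h (x + y)) = (\<Sum>y\<in>(UNIV::(bit^'n) set). h y)"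
  using sum_shift[of "h" x] by (simp add: add.commute)

definition Wt :: "(bit^'n \<Rightarrow> 'm) \<Rightarrow> bit^'n \<Rightarrow> real" where
  "Wt M a = (\<Sum>m\<in>range M. (\<Sum>x\<in>{x. M x = m}. chi a x)^2 / (real (card (UNIV :: (bit^'n) set)) * real (card {x. M x = m})))"

lemma err_lower:
  fixes M :: "bit^'n \<Rightarrow> 'm" and f :: "bit^'n \<Rightarrow> real"
  shows "expect (\<lambda>x. expect (\<lambda>y. (B (M x) y - f (x + y))^2)) \<ge> norm2sq f - (\<Sum>a\<in>UNIV. (fourier f a)^2 * Wt M a)"
proof -
  let ?N = "real (card (UNIV :: (bit^'n) set))"
  let ?S = "\<lambda>m. {x. M x = m}"
  have N0: "?N > 0" using card_UNIV_pos by simp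
  have Sne: "m \<in> range M \<Longrightarrow> ?S m \<noteq> {}" for m by auto
  have regroup: "(\<Sum>x\<in>UNIV. h x) = (\<Sum>m\<in>range M. \<Sum>x\<in>?S m. h x)" for h :: "bit^'n \<Rightarrow> real"
    using sum.image_gen[of "UNIV :: (bit^'n) set" h M] by simp
  have "expect (\<lambda>x. expect (\<lambda>y. (B (M x) y - f (x + y))^2)) * ?N^2
      = (\<Sum>x\<in>UNIV. \<Sum>y\<in>UNIV. (B (M x) y - f (x + y))^2)"
    using N0 by (simp add: expect_def sum_divide_distrib[symmetric] power2_eq_square)
  also have "\<dots> = (\<Sum>y\<in>UNIV. \<Sum>x\<in>UNIV. (B (M x) y - f (x + y))^2)"
    by (rule sum.swap)
  also have "\<dots> = (\<Sum>y\<in>UNIV. \<Sum>m\<in>range M. \<Sum>x\<in>?S m. (B m y - f (x + y))^2)"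
    by (rule sum.cong[OF refl], subst regroup, rule sum.cong[OF refl], rule sum.cong) auto
  also have "\<dots> \<ge> (\<Sum>y\<in>UNIV. \<Sum>m\<in>range M. (\<Sum>x\<in>?S m. (f (x + y))^2) - (\<Sum>x\<in>?S m. f (x + y))^2 / real (card (?S m)))"
    by (intro sum_mono var_lb) auto
  finally have A: "expect (\<lambda>x. expect (\<lambda>y. (B (M x) y - f (x + y))^2)) * ?N^2 \<ge>
      (\<Sum>y\<in>UNIV. \<Sum>m\<in>range M. (\<Sum>x\<in>?S m. (f (x + y))^2)) - (\<Sum>m\<in>range M. (\<Sum>y\<in>UNIV. (\<Sum>x\<in>?S m. f (x + y))^2) / real (card (?S m)))"
    by (simp add: sum_subtractf sum_divide_distrib sum.swap[of _ "range M"])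
  have B1: "(\<Sum>y\<in>UNIV. \<Sum>m\<in>range M. (\<Sum>x\<in>?S m. (f (x + y))^2)) = ?N^2 * norm2sq f"
  proof -
    have "(\<Sum>y\<in>UNIV. \<Sum>m\<in>range M. (\<Sum>x\<in>?S m. (f (x + y))^2)) = (\<Sum>y\<in>UNIV. \<Sum>x\<in>UNIV. (f (x + y))^2)"
      by (rule sum.cong[OF refl], subst regroup, rule refl)
    also have "\<dots> = (\<Sum>x\<in>UNIV. \<Sum>y\<in>UNIV. (f (x + y))^2)" by (rule sum.swap)
    also have "\<dots> = (\<Sum>x\<in>(UNIV::(bit^'n) set). \<Sum>y\<in>UNIV. (f y)^2)"
      by (rule sum.cong[OF refl], rule sum_shift2)
    also have "\<dots> = ?N^2 * norm2sq f"
      using N0 by (simp add: norm2sq_def expect_def power2_eq_square)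
    finally show ?thesis .
  qed
  have B2: "(\<Sum>m\<in>range M. (\<Sum>y\<in>UNIV. (\<Sum>x\<in>?S m. f (x + y))^2) / real (card (?S m)))
      = ?N^2 * (\<Sum>a\<in>UNIV. (fourier f a)^2 * Wt M a)"
  proof -
    have "(\<Sum>m\<in>range M. (\<Sum>y\<in>UNIV. (\<Sum>x\<in>?S m. f (x + y))^2) / real (card (?S m)))
       = (\<Sum>m\<in>range M. ?N * (\<Sum>a\<in>UNIV. (fourier f a)^2 * (\<Sum>x\<in>?S m. chi a x)^2) / real (card (?S m)))"
      by (simp add: conv_sq)
    also have "\<dots> = (\<Sum>m\<in>range M. \<Sum>a\<in>UNIV. ?N^2 * ((fourier f a)^2 * ((\<Sum>x\<in>?S m. chi a x)^2 / (?N * real (card (?S m))))))"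
      using N0 by (simp add: sum_distrib_left sum_divide_distrib power2_eq_square field_simps)
    also have "\<dots> = (\<Sum>a\<in>UNIV. \<Sum>m\<in>range M. ?N^2 * ((fourier f a)^2 * ((\<Sum>x\<in>?S m. chi a x)^2 / (?N * real (card (?S m))))))"
      by (rule sum.swap)
    also have "\<dots> = ?N^2 * (\<Sum>a\<in>UNIV. (fourier f a)^2 * Wt M a)"
      by (simp add: Wt_def sum_distrib_left)
    finally show ?thesis .
  qed
  from A B1 B2 have "expect (\<lambda>x. expect (\<lambda>y. (B (M x) y - f (x + y))^2)) * ?N^2 \<ge>
      ?N^2 * (norm2sq f - (\<Sum>a\<in>UNIV. (fourier f a)^2 * Wt M a))"
    by (simp add: right_diff_distrib)
  then show ?thesis using N0 by (simp add: mult.commute)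
qed



lemma cosh_le_aux:
  fixes x :: real assumes "x \<ge> 0" shows "ln (cosh x) \<le> x^2/2"
proof -
  have d1: "((\<lambda>t. t * cosh t - sinh t) has_real_derivative (t * sinh t)) (at t)" for t :: real
    by (rule derivative_eq_intros refl | simp)+
  have p1: "t * cosh t - sinh t \<ge> 0" if "t \<ge> 0" for t :: real
  proof -
    have "0 * cosh 0 - sinh (0::real) \<le> t * cosh t - sinh t"
      apply (rule DERIV_nonneg_imp_nondecreasing[OF that])
      subgoal for s using d1[of s] by (intro exI[of _ "s * sinh s"]) auto
      done
    then show ?thesis by simp
  qed
  have d2: "((\<lambda>t. t^2/2 - ln (cosh t)) has_real_derivative (t - sinh t / cosh t)) (at t)" for t :: real
    by (rule derivative_eq_intros refl | simp)+
  have "0^2/2 - ln (cosh (0::real)) \<le> x^2/2 - ln (cosh x)"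
  proof (rule DERIV_nonneg_imp_nondecreasing[OF assms])
    fix t :: real assume t: "0 \<le> t" "t \<le> x"
    have "sinh t \<le> t * cosh t" using p1[OF t(1)] by simp
    then have "sinh t / cosh t \<le> t" by (simp add: divide_le_eq)
    then show "\<exists>y. ((\<lambda>t. t^2/2 - ln (cosh t)) has_real_derivative y) (at t) \<and> 0 \<le> y"
      using d2[of t] by auto
  qed
  then show ?thesis by simp
qed

lemma cosh_le_exp: "cosh (x::real) \<le> exp (x^2/2)"
proof -
  have "ln (cosh \<bar>x\<bar>) \<le> \<bar>x\<bar>^2/2" by (rule cosh_le_aux) simp
  then have "ln (cosh x) \<le> x^2/2" by simp
  then show ?thesis by (metis cosh_real_pos exp_le_cancel_iff exp_ln)
qed

lemma prod_chi: "finite T \<Longrightarrow> (\<Prod>a\<in>T. chi a x) = chi (\<Sum>a\<in>T. a) x"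
  by (induction T rule: finite_induct) (auto simp: chi_zero chi_add_left)

lemma indep_sum_nz:
  fixes I :: "(bit^'n) set"
  assumes "vec.independent I" "T \<subseteq> I" "T \<noteq> {}"
  shows "(\<Sum>a\<in>T. a) \<noteq> 0"
proof
  assume s: "(\<Sum>a\<in>T. a) = 0"
  have fT: "finite T" by simp
  have "vec.dependent T"
    unfolding vec.dependent_finite[OF fT]
    using s assms(3) by (intro exI[of _ "\<lambda>_. 1"]) auto
  then have "vec.dependent I" using assms(2) by (rule vec.dependent_mono)
  then show False using assms(1) by simp
qed

lemma exp_chi: "exp (b * chi a x) = chi a x * sinh b + cosh b"
  using chi_pm[of a x] by (auto simp: cosh_plus_sinh[symmetric] cosh_minus_sinh[symmetric])

lemma exp_sum_chi:
  fixes I :: "(bit^'n) set" and b :: "bit^'n \<Rightarrow> real"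
  assumes ind: "vec.independent I"
  shows "(\<Sum>x\<in>UNIV. exp (\<Sum>a\<in>I. b a * chi a x)) = real (card (UNIV :: (bit^'n) set)) * (\<Prod>a\<in>I. cosh (b a))"
proof -
  let ?N = "real (card (UNIV :: (bit^'n) set))"
  have fI: "finite I" by simp
  have "(\<Sum>x\<in>UNIV. exp (\<Sum>a\<in>I. b a * chi a x)) = (\<Sum>x\<in>UNIV. \<Prod>a\<in>I. chi a x * sinh (b a) + cosh (b a))"
    by (simp add: exp_sum exp_chi)
  also have "\<dots> = (\<Sum>x\<in>UNIV. \<Sum>T\<in>Pow I. (\<Prod>a\<in>T. chi a x * sinh (b a)) * (\<Prod>a\<in>I-T. cosh (b a)))"
    by (simp add: prod_add[OF fI])
  also have "\<dots> = (\<Sum>x\<in>UNIV. \<Sum>T\<in>Pow I. chi (\<Sum>a\<in>T. a) x * ((\<Prod>a\<in>T. sinh (b a)) * (\<Prod>a\<in>I-T. cosh (b a))))"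
    by (rule sum.cong[OF refl], rule sum.cong[OF refl]) (simp add: prod.distrib prod_chi)
  also have "\<dots> = (\<Sum>T\<in>Pow I. \<Sum>x\<in>UNIV. chi (\<Sum>a\<in>T. a) x * ((\<Prod>a\<in>T. sinh (b a)) * (\<Prod>a\<in>I-T. cosh (b a))))"
    by (rule sum.swap)
  also have "\<dots> = (\<Sum>T\<in>Pow I. (if T = {} then ?N else 0) * ((\<Prod>a\<in>T. sinh (b a)) * (\<Prod>a\<in>I-T. cosh (b a))))"
  proof (rule sum.cong[OF refl])
    fix T assume T: "T \<in> Pow I"
    have "(\<Sum>a\<in>T. a) = 0 \<longleftrightarrow> T = {}" using indep_sum_nz[OF ind, of T] T by auto
    then show "(\<Sum>x\<in>UNIV. chi (\<Sum>a\<in>T. a) x * ((\<Prod>a\<in>T. sinh (b a)) * (\<Prod>a\<in>I-T. cosh (b a))))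
        = (if T = {} then ?N else 0) * ((\<Prod>a\<in>T. sinh (b a)) * (\<Prod>a\<in>I-T. cosh (b a)))"
      by (simp add: sum_distrib_right[symmetric] sum_chi)
  qed
  also have "\<dots> = (\<Sum>T\<in>Pow I. if T = {} then ?N * ((\<Prod>a\<in>T. sinh (b a)) * (\<Prod>a\<in>I-T. cosh (b a))) else 0)"
    by (rule sum.cong) auto
  also have "\<dots> = ?N * (\<Prod>a\<in>I. cosh (b a))"
    by (subst sum.delta) auto
  finally show ?thesis .
qed

lemma msg_bound:
  fixes I :: "(bit^'n) set" and S :: "(bit^'n) set"
  assumes ind: "vec.independent I" and Sne: "S \<noteq> {}"
  shows "(\<Sum>a\<in>I. (\<Sum>x\<in>S. chi a x)^2) \<le> 2 * (real (card S))^2 * ln (real (card (UNIV :: (bit^'n) set)) / real (card S))"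
proof -
  let ?N = "real (card (UNIV :: (bit^'n) set))"
  define k where "k = real (card S)"
  have k0: "k > 0" using Sne by (simp add: k_def card_gt_0_iff)
  have "card S \<le> card (UNIV :: (bit^'n) set)" by (rule card_mono) auto
  then have kN: "k \<le> ?N" unfolding k_def by (simp only: of_nat_le_iff)
  define b where "b a = (\<Sum>x\<in>S. chi a x) / k" for a
  define W where "W = (\<Sum>a\<in>I. (b a)^2)"
  define Z where "Z x = (\<Sum>a\<in>I. b a * chi a x)" for x
  have sumZ: "(\<Sum>x\<in>S. Z x) = k * W"
  proof -
    have "(\<Sum>x\<in>S. Z x) = (\<Sum>a\<in>I. b a * (\<Sum>x\<in>S. chi a x))"
      unfolding Z_def by (subst sum.swap) (simp add: sum_distrib_left)
    also have "\<dots> = (\<Sum>a\<in>I. k * (b a)^2)"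
      using k0 by (intro sum.cong refl) (simp add: b_def power2_eq_square)
    finally show ?thesis by (simp add: W_def sum_distrib_left)
  qed
  have lo: "exp W * (1 + (Z x - W)) \<le> exp (Z x)" for x
  proof -
    have "exp W * (1 + (Z x - W)) \<le> exp W * exp (Z x - W)"
      by (intro mult_left_mono exp_ge_add_one_self) simp
    also have "\<dots> = exp (Z x)" by (simp add: exp_diff)
    finally show ?thesis .
  qed
  have "(\<Sum>x\<in>S. exp W * (1 + (Z x - W))) = exp W * (k + (k * W - k * W))"
    by (simp add: sum_distrib_left[symmetric] sum.distrib sum_subtractf sumZ k_def)
  then have A: "k * exp W \<le> (\<Sum>x\<in>S. exp (Z x))"
    using sum_mono[of S "\<lambda>x. exp W * (1 + (Z x - W))" "\<lambda>x. exp (Z x)", OF lo] by (simp add: mult.commute)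
  have "(\<Sum>x\<in>S. exp (Z x)) \<le> (\<Sum>x\<in>UNIV. exp (Z x))"
    by (rule sum_mono2) auto
  also have "\<dots> = ?N * (\<Prod>a\<in>I. cosh (b a))"
    unfolding Z_def by (rule exp_sum_chi[OF ind])
  also have "\<dots> \<le> ?N * (\<Prod>a\<in>I. exp ((b a)^2/2))"
    by (intro mult_left_mono prod_mono conjI cosh_le_exp) (auto intro: order.trans[OF zero_le_one cosh_real_ge_1])
  also have "\<dots> = ?N * exp (W/2)"
    by (simp add: W_def exp_sum sum_divide_distrib)
  finally have "k * exp W \<le> ?N * exp (W/2)" using A by linarith
  moreover have "exp W = exp (W/2) * exp (W/2)" by (simp add: exp_add[symmetric])
  ultimately have "k * exp (W/2) \<le> ?N" by (simp add: mult.assoc[symmetric])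
  then have "exp (W/2) \<le> ?N / k" using k0 by (simp add: field_simps)
  then have Wle: "W/2 \<le> ln (?N / k)" using k0 kN by (subst ln_ge_iff) auto
  have "k^2 * W \<le> k^2 * (2 * ln (?N / k))" using Wle by (intro mult_left_mono) auto
  moreover have "(\<Sum>a\<in>I. (\<Sum>x\<in>S. chi a x)^2) = k^2 * W"
    using k0 by (simp add: W_def b_def sum_distrib_left power_divide)
  ultimately show ?thesis by (simp add: k_def mult.assoc mult.commute mult.left_commute)
qed



lemma card_part:
  fixes M :: "bit^'n \<Rightarrow> 'm"
  shows "(\<Sum>m\<in>range M. real (card {x. M x = m})) = real (card (UNIV :: (bit^'n) set))"
proof -
  have "(\<Sum>x\<in>(UNIV::(bit^'n) set). (1::real)) = (\<Sum>m\<in>range M. \<Sum>x\<in>{x. M x = m}. 1)"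
    using sum.image_gen[of "UNIV :: (bit^'n) set" "\<lambda>_. (1::real)" M] by simp
  then show ?thesis by simp
qed

lemma card_S_pos: fixes M :: "bit^'n \<Rightarrow> 'm" shows "m \<in> range M \<Longrightarrow> card {x. M x = m} > 0"
  by (auto simp: card_gt_0_iff)

lemma abs_chi: "\<bar>chi a x\<bar> = 1"
  by (simp add: chi_def)

lemma gibbs:
  fixes M :: "bit^'n \<Rightarrow> 'm"
  shows "(\<Sum>m\<in>range M. (real (card {x. M x = m}) / real (card (UNIV :: (bit^'n) set)))
           * ln (real (card (UNIV :: (bit^'n) set)) / real (card {x. M x = m}))) \<le> ln (real (card (range M)))"
proof -
  let ?N = "real (card (UNIV :: (bit^'n) set))"
  let ?K = "real (card (range M))"
  let ?mu = "\<lambda>m. real (card {x. M x = m}) / ?N"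
  have N0: "?N > 0" using card_UNIV_pos by simp
  have K0: "?K > 0" by (simp add: card_gt_0_iff)
  have mu0: "?mu m > 0" if "m \<in> range M" for m
    using that N0 card_S_pos[OF that] by simp
  have smu: "(\<Sum>m\<in>range M. ?mu m) = 1"
    using N0 card_part[of M] by (simp add: sum_divide_distrib[symmetric])
  have "(\<Sum>m\<in>range M. ?mu m * ln (?N / real (card {x. M x = m}))) - ln ?K
      = (\<Sum>m\<in>range M. ?mu m * ln (1 / (?K * ?mu m)))"
  proof -
    have "(\<Sum>m\<in>range M. ?mu m * ln (1 / (?K * ?mu m)))
        = (\<Sum>m\<in>range M. ?mu m * ln (?N / real (card {x. M x = m})) - ?mu m * ln ?K)"
    proof (rule sum.cong[OF refl])
      fix m assume m: "m \<in> range M"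
      have c0: "real (card {x. M x = m}) > 0" using m by (auto simp: card_gt_0_iff)
      have e1: "1 / (?K * ?mu m) = (?N / real (card {x. M x = m})) / ?K"
        using c0 N0 K0 by (simp add: field_simps)
      have "ln ((?N / real (card {x. M x = m})) / ?K) = ln (?N / real (card {x. M x = m})) - ln ?K"
        using c0 N0 K0 by (intro ln_divide_pos) auto
      then have "ln (1 / (?K * ?mu m)) = ln (?N / real (card {x. M x = m})) - ln ?K"
        by (simp only: e1)
      then show "?mu m * ln (1 / (?K * ?mu m)) = ?mu m * ln (?N / real (card {x. M x = m})) - ?mu m * ln ?K"
        by (simp add: right_diff_distrib)
    qed
    also have "\<dots> = (\<Sum>m\<in>range M. ?mu m * ln (?N / real (card {x. M x = m}))) - ln ?K"
    proof -
      have "(\<Sum>m\<in>range M. ?mu m * ln ?K) = ln ?K"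
        by (simp only: sum_distrib_right[symmetric] smu mult_1)
      then show ?thesis by (simp only: sum_subtractf)
    qed
    finally show ?thesis by simp
  qed
  also have "\<dots> \<le> (\<Sum>m\<in>range M. ?mu m * (1 / (?K * ?mu m) - 1))"
  proof (rule sum_mono)
    fix m assume m: "m \<in> range M"
    have p: "?mu m > 0" using mu0[OF m] .
    have "1 / (?K * ?mu m) > 0" by (rule divide_pos_pos[OF zero_less_one mult_pos_pos[OF K0 p]])
    then show "?mu m * ln (1 / (?K * ?mu m)) \<le> ?mu m * (1 / (?K * ?mu m) - 1)"
      using p by (intro mult_left_mono ln_le_minus_one) auto
  qed
  also have "\<dots> = (\<Sum>m\<in>range M. 1 / ?K - ?mu m)"
    by (rule sum.cong[OF refl]) (use mu0 K0 in \<open>auto simp: field_simps\<close>)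
  also have "\<dots> = 0"
  proof -
    have "(\<Sum>m\<in>range M. 1 / ?K) = 1" using K0 by simp
    then show ?thesis by (simp only: sum_subtractf smu diff_self)
  qed
  finally show ?thesis by simp
qed

lemma Wt_bounds:
  fixes M :: "bit^'n \<Rightarrow> 'm"
  shows "0 \<le> Wt M a" "Wt M a \<le> 1"
proof -
  let ?N = "real (card (UNIV :: (bit^'n) set))"
  have N0: "?N > 0" using card_UNIV_pos by simp
  show "0 \<le> Wt M a" unfolding Wt_def by (intro sum_nonneg) simp
  have "Wt M a \<le> (\<Sum>m\<in>range M. real (card {x. M x = m}) / ?N)"
    unfolding Wt_def
  proof (rule sum_mono)
    fix m assume m: "m \<in> range M"
    let ?k = "real (card {x. M x = m})"
    have k0: "?k > 0" using m by (auto simp: card_gt_0_iff)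
    have "\<bar>\<Sum>x\<in>{x. M x = m}. chi a x\<bar> \<le> (\<Sum>x\<in>{x. M x = m}. \<bar>chi a x\<bar>)" by (rule sum_abs)
    also have "\<dots> = ?k" by (simp add: abs_chi)
    finally have "(\<Sum>x\<in>{x. M x = m}. chi a x)^2 \<le> ?k^2"
      by (metis abs_ge_zero power2_abs power_mono)
    then show "(\<Sum>x\<in>{x. M x = m}. chi a x)^2 / (?N * ?k) \<le> ?k / ?N"
      using k0 N0 by (simp add: divide_le_eq power2_eq_square field_simps)
  qed
  also have "\<dots> = 1" using N0 card_part[of M] by (simp add: sum_divide_distrib[symmetric])
  finally show "Wt M a \<le> 1" .
qed

lemma Wt_indep:
  fixes M :: "bit^'n \<Rightarrow> 'm" and I :: "(bit^'n) set"
  assumes ind: "vec.independent I"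
  shows "(\<Sum>a\<in>I. Wt M a) \<le> 2 * ln (real (card (range M)))"
proof -
  let ?N = "real (card (UNIV :: (bit^'n) set))"
  have N0: "?N > 0" using card_UNIV_pos by simp
  have "(\<Sum>a\<in>I. Wt M a) = (\<Sum>m\<in>range M. (\<Sum>a\<in>I. (\<Sum>x\<in>{x. M x = m}. chi a x)^2) / (?N * real (card {x. M x = m})))"
    unfolding Wt_def by (subst sum.swap) (simp add: sum_divide_distrib)
  also have "\<dots> \<le> (\<Sum>m\<in>range M. 2 * (real (card {x. M x = m}))^2 * ln (?N / real (card {x. M x = m})) / (?N * real (card {x. M x = m})))"
  proof (rule sum_mono)
    fix m assume m: "m \<in> range M"
    have k0: "real (card {x. M x = m}) > 0" using m by (auto simp: card_gt_0_iff)
    show "(\<Sum>a\<in>I. (\<Sum>x\<in>{x. M x = m}. chi a x)^2) / (?N * real (card {x. M x = m}))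
        \<le> 2 * (real (card {x. M x = m}))^2 * ln (?N / real (card {x. M x = m})) / (?N * real (card {x. M x = m}))"
      using msg_bound[OF ind, of "{x. M x = m}"] m k0 N0
      by (intro divide_right_mono) auto
  qed
  also have "\<dots> = 2 * (\<Sum>m\<in>range M. (real (card {x. M x = m}) / ?N) * ln (?N / real (card {x. M x = m})))"
    unfolding sum_distrib_left
    by (rule sum.cong[OF refl]) (simp add: power2_eq_square field_simps)
  also have "\<dots> \<le> 2 * ln (real (card (range M)))"
    using gibbs[of M] by simp
  finally show ?thesis .
qed



lemma geom2: "(\<Sum>i\<le>c. (2::nat)^i) = 2^(c+1) - 1"
  by (induction c) auto

lemma card_msgs:
  fixes M :: "'a \<Rightarrow> bool list"
  assumes "\<forall>x. length (M x) \<le> c"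
  shows "card (range M) \<le> 2^(c+1) - 1"
proof -
  have "range M \<subseteq> {xs. set xs \<subseteq> (UNIV::bool set) \<and> length xs \<le> c}" using assms by auto
  then have "card (range M) \<le> card {xs. set xs \<subseteq> (UNIV::bool set) \<and> length xs \<le> c}"
    by (intro card_mono finite_lists_length_le) auto
  also have "\<dots> = (\<Sum>i\<le>c. 2^i)" using card_lists_length_le[of "UNIV::bool set" c] by simp
  finally show ?thesis by (simp add: geom2)
qed

lemma exp_two_ge: "(7::real) \<le> exp 2"
proof -
  have "(1 + 2 / real (100::nat))^100 \<le> exp (2::real)"
    by (rule exp_ge_one_plus_x_over_n_power_n) auto
  moreover have "(7::real) \<le> (1 + 2 / real (100::nat))^100" by (simp add: power_divide)
  ultimately show ?thesis by linarith
qed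

lemma exp_109_ge: "(3::real) \<le> exp (10/9)"
proof -
  have "(1 + (10/9) / real (90::nat))^90 \<le> exp (10/9::real)"
    by (rule exp_ge_one_plus_x_over_n_power_n) auto
  moreover have "(3::real) \<le> (1 + (10/9) / real (90::nat))^90" by (simp add: power_divide)
  ultimately show ?thesis by linarith
qed

lemma pow_exp: "3 \<le> c \<Longrightarrow> real (2^(c+1)) \<le> exp (real c)"
proof (induction c rule: dec_induct)
  case base
  have "(1 + 3 / real (30::nat))^30 \<le> exp (3::real)"
    by (rule exp_ge_one_plus_x_over_n_power_n) auto
  moreover have "(16::real) \<le> (1 + 3 / real (30::nat))^30" by (simp add: power_divide)
  ultimately show ?case by simp
next
  case (step n)
  have e1: "2 \<le> exp (1::real)" using exp_ge_add_one_self[of 1] by simp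
  have "real (2^(Suc n + 1)) = 2 * real (2^(n+1))" by simp
  also have "\<dots> \<le> exp 1 * exp (real n)"
    using step.IH e1 by (intro mult_mono) auto
  also have "\<dots> = exp (real (Suc n))" by (simp add: exp_add[symmetric])
  finally show ?case .
qed

lemma lnK1:
  assumes K1: "1 \<le> K" and Kc: "K \<le> 2^(c+1) - 1" and c1: "c \<noteq> 1"
  shows "ln (real K) \<le> real c"
proof -
  have "real K \<le> exp (real c)"
  proof (cases "c = 0 \<or> c = 2")
    case True
    then show ?thesis
    proof
      assume "c = 0" then show ?thesis using Kc by simp
    next
      assume c2: "c = 2"
      then have "real K \<le> 7" using Kc by simp
      then show ?thesis using exp_two_ge c2 by simp
    qed
  next
    case False
    then have "3 \<le> c" using c1 by auto
    then have "real (2^(c+1)) \<le> exp (real c)" by (rule pow_exp)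
    moreover have "K \<le> 2^(c+1)" using Kc by (rule le_trans) simp
    then have "real K \<le> real (2^(c+1))" by (rule of_nat_mono)
    ultimately show ?thesis by linarith
  qed
  then have "ln (real K) \<le> ln (exp (real c))" using K1 by (subst ln_le_cancel_iff) auto
  then show ?thesis by simp
qed

lemma lnK2:
  assumes K1: "1 \<le> K" and Kc: "K \<le> 2^(c+1) - 1" and c1: "c = 1"
  shows "ln (real K) \<le> 10/9"
proof -
  have "real K \<le> 3" using Kc c1 by simp
  then have "real K \<le> exp (10/9)" using exp_109_ge by linarith
  then have "ln (real K) \<le> ln (exp (10/9))" using K1 by (subst ln_le_cancel_iff) auto
  then show ?thesis by simp
qed



theorem mainTheorem2:
  fixes f :: "bit ^ 'n \<Rightarrow> real" and \<epsilon> \<delta> :: real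
  assumes "\<epsilon> > 0" and "0 < \<delta>" and "\<delta> \<le> 1/2"
    and "norm2sq f - \<epsilon> * (1 + 2 * \<delta>) > 0"
  shows "real (oneway_cc \<epsilon> f) \<ge> \<delta> / 2 * real (approx_fourier_dim (norm2sq f - \<epsilon> * (1 + 2 * \<delta>)) f)"
proof -
  note eps = assms(1) and dpos = assms(2) and dhalf = assms(3)
  obtain xs :: "'n list" where xs: "set xs = UNIV" using finite_list[of "UNIV :: 'n set"] by auto
  define Enc where "Enc x = map (\<lambda>i. x $ i = 1) xs" for x :: "bit^'n"
  have injE: "inj Enc"
  proof (rule injI)
    fix x y assume "Enc x = Enc y"
    then have h: "\<forall>i\<in>set xs. (x $ i = 1) = (y $ i = 1)" by (simp add: Enc_def map_eq_conv)
    have "x $ i = y $ i" for i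
    proof -
      have "(x $ i = 1) = (y $ i = 1)" using h xs by auto
      then show ?thesis by (cases "x $ i"; cases "y $ i") auto
    qed
    then show "x = y" by (simp add: vec_eq_iff)
  qed
  have ex: "\<exists>c. \<exists>(M :: bit ^ 'n \<Rightarrow> bool list) (B :: bool list \<Rightarrow> bit ^ 'n \<Rightarrow> real).
      (\<forall>x. length (M x) \<le> c) \<and>
      expect (\<lambda>x. expect (\<lambda>y. (B (M x) y - f (x + y))^2)) \<le> \<epsilon>"
  proof (intro exI conjI)
    show "\<forall>x. length (Enc x) \<le> length xs" by (simp add: Enc_def)
    have "expect (\<lambda>x. expect (\<lambda>y. ((\<lambda>l y. f (inv Enc l + y)) (Enc x) y - f (x + y))^2)) = 0"
      by (simp add: inv_f_f[OF injE] expect_def)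
    then show "expect (\<lambda>x. expect (\<lambda>y. ((\<lambda>l y. f (inv Enc l + y)) (Enc x) y - f (x + y))^2)) \<le> \<epsilon>"
      using eps by simp
  qed
  define c where "c = oneway_cc \<epsilon> f"
  from LeastI_ex[OF ex] obtain M :: "bit ^ 'n \<Rightarrow> bool list" and B :: "bool list \<Rightarrow> bit ^ 'n \<Rightarrow> real"
    where Mlen: "\<forall>x. length (M x) \<le> c"
      and Merr: "expect (\<lambda>x. expect (\<lambda>y. (B (M x) y - f (x + y))^2)) \<le> \<epsilon>"
    unfolding c_def oneway_cc_def by blast
  define K where "K = card (range M)"
  define dl where "dl = 2 * \<delta> / (1 + 2 * \<delta>)"
  define P where "P = {a. Wt M a \<ge> dl}"
  obtain Bs where Bs: "Bs \<subseteq> P" "vec.independent Bs" "P \<subseteq> vec.span Bs" "card Bs = vec.dim P"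
    by (rule vec.basis_exists)
  define V where "V = vec.span P"
  have subV: "vec.subspace V" by (simp add: V_def vec.subspace_span)
  have dimV: "vec.dim V = card Bs" by (simp add: V_def Bs(4))
  have E1: "norm2sq f - (\<Sum>a\<in>UNIV. (fourier f a)^2 * Wt M a) \<le> \<epsilon>"
    using err_lower[where B=B and M=M and f=f] Merr by linarith
  have E2: "(\<Sum>a\<in>UNIV. (fourier f a)^2 * (1 - Wt M a)) \<le> \<epsilon>"
    using E1 parseval[of f] by (simp add: right_diff_distrib sum_subtractf)
  have outV: "Wt M a < dl" if "a \<notin> V" for a
  proof -
    have "a \<notin> P" using that vec.span_superset[of P] unfolding V_def by blast
    then show ?thesis by (simp add: P_def)
  qed
  have dl1: "1 - dl = 1 / (1 + 2 * \<delta>)" using dpos by (simp add: dl_def field_simps)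
  have E3: "(\<Sum>a\<in>-V. (fourier f a)^2 * (1 - dl)) \<le> (\<Sum>a\<in>-V. (fourier f a)^2 * (1 - Wt M a))"
    by (intro sum_mono mult_left_mono) (auto dest: outV intro: less_imp_le)
  have E4: "(\<Sum>a\<in>-V. (fourier f a)^2 * (1 - Wt M a)) \<le> (\<Sum>a\<in>UNIV. (fourier f a)^2 * (1 - Wt M a))"
    by (rule sum_mono2) (auto intro!: mult_nonneg_nonneg simp: Wt_bounds)
  have "(\<Sum>a\<in>-V. (fourier f a)^2) * (1 - dl) = (\<Sum>a\<in>-V. (fourier f a)^2 * (1 - dl))"
    by (rule sum_distrib_right)
  then have "(\<Sum>a\<in>-V. (fourier f a)^2) * (1 - dl) \<le> \<epsilon>" using E2 E3 E4 by linarith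
  then have "(\<Sum>a\<in>-V. (fourier f a)^2) * (1 / (1 + 2 * \<delta>)) \<le> \<epsilon>" by (simp only: dl1)
  then have out: "(\<Sum>a\<in>-V. (fourier f a)^2) \<le> \<epsilon> * (1 + 2 * \<delta>)"
    using dpos by (simp add: field_simps)
  have "(\<Sum>a\<in>UNIV. (fourier f a)^2) = (\<Sum>a\<in>V \<union> -V. (fourier f a)^2)" by simp
  also have "\<dots> = (\<Sum>a\<in>V. (fourier f a)^2) + (\<Sum>a\<in>-V. (fourier f a)^2)"
    by (rule sum.union_disjoint) auto
  finally have "norm2sq f = (\<Sum>a\<in>V. (fourier f a)^2) + (\<Sum>a\<in>-V. (fourier f a)^2)"
    using parseval[of f] by simp
  then have mass: "norm2sq f - \<epsilon> * (1 + 2 * \<delta>) \<le> (\<Sum>a\<in>V. (fourier f a)^2)"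
    using out by linarith
  have D: "approx_fourier_dim (norm2sq f - \<epsilon> * (1 + 2 * \<delta>)) f \<le> card Bs"
    unfolding approx_fourier_dim_def
    by (rule Least_le) (use subV dimV mass in blast)
  have "real (card Bs) * dl = (\<Sum>a\<in>Bs. dl)" by simp
  also have "\<dots> \<le> (\<Sum>a\<in>Bs. Wt M a)" by (rule sum_mono) (use Bs(1) in \<open>auto simp: P_def\<close>)
  also have "\<dots> \<le> 2 * ln (real K)" unfolding K_def by (rule Wt_indep[OF Bs(2)])
  finally have d1: "real (card Bs) * dl \<le> 2 * ln (real K)" .
  have dB: "real (card Bs) * \<delta> \<le> (1 + 2 * \<delta>) * ln (real K)"
  proof -
    have "real (card Bs) * dl * ((1 + 2 * \<delta>) / 2) \<le> 2 * ln (real K) * ((1 + 2 * \<delta>) / 2)"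
      using d1 dpos by (intro mult_right_mono) auto
    moreover have "real (card Bs) * dl * ((1 + 2 * \<delta>) / 2) = real (card Bs) * \<delta>"
      using dpos by (simp add: dl_def field_simps)
    moreover have "2 * ln (real K) * ((1 + 2 * \<delta>) / 2) = (1 + 2 * \<delta>) * ln (real K)"
      by simp
    ultimately show ?thesis by linarith
  qed
  have K1: "1 \<le> K" unfolding K_def by (simp add: Suc_le_eq card_gt_0_iff)
  have Kc: "K \<le> 2^(c+1) - 1" unfolding K_def by (rule card_msgs[OF Mlen])
  have lnK0: "0 \<le> ln (real K)" using K1 by simp
  have main: "real (card Bs) * \<delta> \<le> 2 * real c"
  proof (cases "c = 1")
    case False
    have L: "ln (real K) \<le> real c" by (rule lnK1[OF K1 Kc False])
    have "(1 + 2 * \<delta>) * ln (real K) \<le> 2 * ln (real K)" using dhalf lnK0 by (intro mult_right_mono) auto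
    then show ?thesis using dB L by linarith
  next
    case True
    have L: "ln (real K) \<le> 10/9" by (rule lnK2[OF K1 Kc True])
    have L2: "(1 + 2 * \<delta>) * ln (real K) \<le> (1 + 2 * \<delta>) * (10/9)" using dpos L by (intro mult_left_mono) auto
    show ?thesis
    proof (cases "card Bs \<le> 4")
      case True
      then have "real (card Bs) * \<delta> \<le> 4 * (1/2)" using dpos dhalf by (intro mult_mono) auto
      then show ?thesis using \<open>c = 1\<close> by simp
    next
      case False
      then have "5 * \<delta> \<le> real (card Bs) * \<delta>" using dpos by (intro mult_right_mono) auto
      then show ?thesis using dB L2 \<open>c = 1\<close> by (simp add: algebra_simps)
    qed
  qed
  have "\<delta> / 2 * real (approx_fourier_dim (norm2sq f - \<epsilon> * (1 + 2 * \<delta>)) f) \<le> \<delta> / 2 * real (card Bs)"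
    using D dpos by (intro mult_left_mono) auto
  also have "\<dots> = (real (card Bs) * \<delta>) / 2" by simp
  also have "\<dots> \<le> real c" using main by linarith
  finally show ?thesis unfolding c_def .
qed


end
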